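(* Let $X$ be a countably compact space satisfying $\mathsf{IC}$. Then $\mathsf{EC}(X,Y)$ holds for every C-closed isocompact space $Y$ with $G_\delta$ points.
   Context: All spaces are Hausdorff and maps continuous. $X$ satisfies $\mathsf{IC}$ if of any two disjoint closed subsets of $X$ at least one is Lindelöf. A space is C-closed if every countably compact subspace is closed, and isocompact if every closed countably compact subset is compact. For a non-Lindelöf space $X$, $\mathsf{EC}(X,Y)$ means: for every continuous $f:X\to Y$ there is a Lindelöf $Z\subset X$ with $f(X\setminus Z)$ a singleton (for Lindelöf $X$ regarded as trivially true). *)

theory Defs
  imports "HOL-Analysis.Analysis"
begin

definition countably_compactin :: "'a topology \<Rightarrow> 'a set \<Rightarrow> bool" where
  "countably_compactin X S \<longleftrightarrow> S \<subseteq> topspace X \<and>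
     (\<forall>\<U>. countable \<U> \<and> (\<forall>U\<in>\<U>. openin X U) \<and> S \<subseteq> \<Union>\<U>
        \<longrightarrow> (\<exists>\<F>. finite \<F> \<and> \<F> \<subseteq> \<U> \<and> S \<subseteq> \<Union>\<F>))"

definition countably_compact_space :: "'a topology \<Rightarrow> bool" where
  "countably_compact_space X \<longleftrightarrow> countably_compactin X (topspace X)"

definition Lindelofin :: "'a topology \<Rightarrow> 'a set \<Rightarrow> bool" where
  "Lindelofin X S \<longleftrightarrow> S \<subseteq> topspace X \<and> Lindelof_space (subtopology X S)"

definition IC :: "'a topology \<Rightarrow> bool" where
  "IC X \<longleftrightarrow> (\<forall>A B. closedin X A \<and> closedin X B \<and> A \<inter> B = {}
      \<longrightarrow> Lindelofin X A \<or> Lindelofin X B)"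

definition C_closed :: "'a topology \<Rightarrow> bool" where
  "C_closed Y \<longleftrightarrow> (\<forall>S. countably_compactin Y S \<longrightarrow> closedin Y S)"

definition isocompact :: "'a topology \<Rightarrow> bool" where
  "isocompact Y \<longleftrightarrow> (\<forall>S. closedin Y S \<and> countably_compactin Y S \<longrightarrow> compactin Y S)"

definition G_delta_points :: "'a topology \<Rightarrow> bool" where
  "G_delta_points Y \<longleftrightarrow> (\<forall>y\<in>topspace Y. gdelta_in Y {y})"

definition EC :: "'a topology \<Rightarrow> 'b topology \<Rightarrow> bool" where
  "EC X Y \<longleftrightarrow> Lindelof_space X \<or>
     (\<forall>f. continuous_map X Y f \<longrightarrow>
        (\<exists>Z. Lindelofin X Z \<and> (\<exists>y. f ` (topspace X - Z) = {y})))"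

end

theory Submission
  imports Defs
begin

lemma lin_closed_sub:
  assumes "closedin X S" "S \<subseteq> C" "Lindelof_space (subtopology X C)"
  shows "Lindelof_space (subtopology X S)"
proof -
  have "closedin (subtopology X C) S"
    using assms(1,2) by (metis closedin_subset_topspace inf.absorb_iff2 closedin_subtopology_Int_closed closedin_topspace topspace_subtopology)
  then have "Lindelof_space (subtopology (subtopology X C) S)"
    using assms(3) Lindelof_space_closedin_subtopology by blast
  then show ?thesis using assms(2) by (simp add: subtopology_subtopology inf.absorb2)
qed

lemma cc_image:
  assumes "countably_compact_space X" "continuous_map X Y f"
  shows "countably_compactin Y (f ` topspace X)"
  unfolding countably_compactin_def
proof (intro conjI allI impI)
  show "f ` topspace X \<subseteq> topspace Y"
    using assms(2) continuous_map_image_subset_topspace by blast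
next
  fix \<U> assume H: "countable \<U> \<and> (\<forall>U\<in>\<U>. openin Y U) \<and> f ` topspace X \<subseteq> \<Union>\<U>"
  define g where "g U = {x \<in> topspace X. f x \<in> U}" for U
  have c1: "countable (g ` \<U>)" using H by simp
  have o1: "\<forall>V\<in>g ` \<U>. openin X V"
    using H assms(2) unfolding g_def by (simp add: openin_continuous_map_preimage)
  have t1: "topspace X \<subseteq> \<Union>(g ` \<U>)"
  proof
    fix x assume "x \<in> topspace X"
    then have "f x \<in> f ` topspace X" by blast
    then obtain U where "U \<in> \<U>" "f x \<in> U" using H by blast
    then show "x \<in> \<Union>(g ` \<U>)" using \<open>x \<in> topspace X\<close> unfolding g_def by blast
  qed
  have cc: "\<forall>\<V>. countable \<V> \<and> (\<forall>U\<in>\<V>. openin X U) \<and> topspace X \<subseteq> \<Union>\<V>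
        \<longrightarrow> (\<exists>\<F>. finite \<F> \<and> \<F> \<subseteq> \<V> \<and> topspace X \<subseteq> \<Union>\<F>)"
    using assms(1) unfolding countably_compact_space_def countably_compactin_def by blast
  have "\<exists>F. finite F \<and> F \<subseteq> g ` \<U> \<and> topspace X \<subseteq> \<Union>F"
    by (rule cc[rule_format]) (intro conjI c1 o1 t1)
  then obtain F where F: "finite F" "F \<subseteq> g ` \<U>" "topspace X \<subseteq> \<Union>F"
    by blast
  then obtain G where G: "G \<subseteq> \<U>" "finite G" "F = g ` G"
    by (meson finite_subset_image)
  have "f ` topspace X \<subseteq> \<Union>G"
  proof
    fix z assume "z \<in> f ` topspace X"
    then obtain x where x: "x \<in> topspace X" "z = f x" by blast
    then obtain W where "W \<in> F" "x \<in> W" using F(3) by blast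
    then obtain U where "U \<in> G" "W = g U" using G(3) by blast
    then show "z \<in> \<Union>G" using \<open>x \<in> W\<close> x unfolding g_def by blast
  qed
  then show "\<exists>\<F>. finite \<F> \<and> \<F> \<subseteq> \<U> \<and> f ` topspace X \<subseteq> \<Union>\<F>" using G by blast
qed

lemma reg_nbhd:
  assumes "Hausdorff_space Y" "compactin Y T" "p \<in> T" "openin Y V" "p \<in> V"
  obtains V' N where "openin Y V'" "p \<in> V'" "closedin Y N" "V' \<subseteq> N" "N \<inter> T \<subseteq> V"
proof -
  have "compactin Y (T - V)"
  proof -
    have "T - V = T \<inter> (topspace Y - V)" using assms(2) compactin_subset_topspace by blast
    then show ?thesis using compact_Int_closedin[OF assms(2), of "topspace Y - V"] assms(4) by auto
  qed
  moreover have "p \<in> topspace Y" using assms(2,3) compactin_subset_topspace by blast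
  then have "compactin Y {p}" by simp
  moreover have "disjnt {p} (T - V)" using assms(5) by (simp add: disjnt_def)
  ultimately obtain U W where UW: "openin Y U" "openin Y W" "{p} \<subseteq> U" "T - V \<subseteq> W" "disjnt U W"
    using Hausdorff_space_compact_separation[OF assms(1), of "{p}" "T - V"] by blast
  have "U \<subseteq> topspace Y" using openin_subset[OF UW(1)] .
  then have "U \<subseteq> topspace Y - W" using UW(5) by (auto simp: disjnt_def)
  moreover have "(topspace Y - W) \<inter> T \<subseteq> V" using UW(4) by blast
  moreover have "closedin Y (topspace Y - W)" using UW(2) by blast
  ultimately show ?thesis
    using that[of U "topspace Y - W"] UW(1,3) by blast
qed

theorem corollary3p10:
  fixes X :: "'a topology" and Y :: "'b topology"
  assumes "Hausdorff_space X" "countably_compact_space X" "IC X"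
    and "Hausdorff_space Y" "C_closed Y" "isocompact Y" "G_delta_points Y"
  shows "EC X Y"
proof -
  let ?L = "\<lambda>S. Lindelof_space (subtopology X S)"
  note XH = assms(1) and XC = assms(2) and XIC = assms(3) and YH = assms(4)
  show ?thesis
  proof (cases "Lindelof_space X")
    case True then show ?thesis by (simp add: EC_def)
  next
    case notL: False
    have "\<exists>Z. Lindelofin X Z \<and> (\<exists>y. f ` (topspace X - Z) = {y})" if f: "continuous_map X Y f" for f
    proof -
      define T where "T = f ` topspace X"
      have Tcc: "countably_compactin Y T" unfolding T_def using cc_image[OF XC f] .
      then have Tcl: "closedin Y T" using assms(5) by (simp add: C_closed_def)
      have Tc: "compactin Y T" using Tcc Tcl assms(6) by (simp add: isocompact_def)
      have TY: "T \<subseteq> topspace Y" using Tc compactin_subset_topspace by blast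
      define good where "good p \<longleftrightarrow> (\<exists>V. openin Y V \<and> p \<in> V \<and>
           (\<exists>C. closedin X C \<and> ?L C \<and> {x \<in> topspace X. f x \<in> V} \<subseteq> C))" for p
      have cover: "?L {x \<in> topspace X. f x \<in> K}"
        if K: "closedin Y K" "K \<inter> T \<subseteq> Collect good" for K
      proof -
        have "\<forall>p. \<exists>V C. good p \<longrightarrow> openin Y V \<and> p \<in> V \<and> closedin X C \<and> ?L C
             \<and> {x \<in> topspace X. f x \<in> V} \<subseteq> C"
        proof
          fix p show "\<exists>V C. good p \<longrightarrow> openin Y V \<and> p \<in> V \<and> closedin X C \<and> ?L C
             \<and> {x \<in> topspace X. f x \<in> V} \<subseteq> C"
          proof (cases "good p")
            case True
            then obtain V C where "openin Y V \<and> p \<in> V \<and> closedin X C \<and> ?L C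
             \<and> {x \<in> topspace X. f x \<in> V} \<subseteq> C" unfolding good_def by blast
            then show ?thesis by blast
          qed simp
        qed
        then obtain V C where VC0: "\<forall>p. good p \<longrightarrow> openin Y (V p) \<and> p \<in> V p \<and> closedin X (C p) \<and> ?L (C p)
             \<and> {x \<in> topspace X. f x \<in> V p} \<subseteq> C p"
          by metis
        have VC: "openin Y (V p) \<and> p \<in> V p \<and> closedin X (C p) \<and> ?L (C p)
             \<and> {x \<in> topspace X. f x \<in> V p} \<subseteq> C p" if "good p" for p
          using VC0 that by blast
        have KT: "compactin Y (K \<inter> T)"
          using compact_Int_closedin[OF Tc K(1)] by (simp add: Int_commute)
        have "K \<inter> T \<subseteq> \<Union>(V ` (K \<inter> T))" using VC K(2) by blast
        moreover have "\<forall>U\<in>V ` (K \<inter> T). openin Y U" using VC K(2) by blast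
        ultimately obtain F where F: "finite F" "F \<subseteq> V ` (K \<inter> T)" "K \<inter> T \<subseteq> \<Union>F"
          using KT unfolding compactin_def by meson
        then obtain P where P: "P \<subseteq> K \<inter> T" "finite P" "F = V ` P"
          by (meson finite_subset_image)
        have sub: "{x \<in> topspace X. f x \<in> K} \<subseteq> \<Union>(C ` P)"
        proof
          fix x assume x: "x \<in> {x \<in> topspace X. f x \<in> K}"
          then have "f x \<in> K \<inter> T" unfolding T_def by blast
          then obtain p where "p \<in> P" "f x \<in> V p" using F P by blast
          then show "x \<in> \<Union>(C ` P)" using VC[of p] P K(2) x by blast
        qed
        have "?L (\<Union>(C ` P))"
        proof (rule Lindelof_space_Union)
          show "countable (C ` P)" using countable_finite[OF finite_imageI[OF P(2)]] .
        next
          fix U assume "U \<in> C ` P"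
          then obtain p where "p \<in> P" "U = C p" by blast
          then have "good p" using P(1) K(2) by blast
          then show "?L U" using VC[of p] \<open>U = C p\<close> by blast
        qed
        moreover have "closedin X {x \<in> topspace X. f x \<in> K}"
          using closedin_continuous_map_preimage[OF f K(1)] .
        ultimately show ?thesis using lin_closed_sub sub by blast
      qed
      have "\<exists>p\<in>T. \<not> good p"
      proof (rule ccontr)
        assume "\<not> (\<exists>p\<in>T. \<not> good p)"
        then have "?L {x \<in> topspace X. f x \<in> topspace Y}"
          using cover[of "topspace Y"] by blast
        moreover have "{x \<in> topspace X. f x \<in> topspace Y} = topspace X"
          using continuous_map_image_subset_topspace[OF f] by blast
        ultimately show False using notL by simp
      qed
      then obtain y where y: "y \<in> T" "\<not> good y" by blast
      have uniq: "p = y" if p: "p \<in> T" "\<not> good p" for p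
      proof (rule ccontr)
        assume "p \<noteq> y"
        moreover have "p \<in> topspace Y" "y \<in> topspace Y" using p(1) y(1) TY by auto
        ultimately have "\<exists>U V. openin Y U \<and> openin Y V \<and> p \<in> U \<and> y \<in> V \<and> disjnt U V"
          using YH unfolding Hausdorff_space_def by simp
        then obtain Vp Vy where V: "openin Y Vp" "openin Y Vy" "p \<in> Vp" "y \<in> Vy" "disjnt Vp Vy"
          by blast
        obtain Vp' Np where Np: "openin Y Vp'" "p \<in> Vp'" "closedin Y Np" "Vp' \<subseteq> Np" "Np \<inter> T \<subseteq> Vp"
          using reg_nbhd[OF YH Tc p(1) V(1,3)] by blast
        obtain Vy' Ny where Ny: "openin Y Vy'" "y \<in> Vy'" "closedin Y Ny" "Vy' \<subseteq> Ny" "Ny \<inter> T \<subseteq> Vy"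
          using reg_nbhd[OF YH Tc y(1) V(2,4)] by blast
        define A where "A = {x \<in> topspace X. f x \<in> Np}"
        define B where "B = {x \<in> topspace X. f x \<in> Ny}"
        have "closedin X A" "closedin X B" unfolding A_def B_def
          using closedin_continuous_map_preimage[OF f] Np Ny by auto
        moreover have "A \<inter> B = {}"
          using Np(5) Ny(5) V(5) unfolding A_def B_def T_def disjnt_def by blast
        ultimately have "Lindelofin X A \<or> Lindelofin X B" using XIC unfolding IC_def by blast
        then show False
        proof
          assume "Lindelofin X A"
          then have "good p" unfolding good_def Lindelofin_def
            using Np \<open>closedin X A\<close> unfolding A_def by blast
          then show False using p by blast
        next
          assume "Lindelofin X B"
          then have "good y" unfolding good_def Lindelofin_def
            using Ny \<open>closedin X B\<close> unfolding B_def by blast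
          then show False using y by blast
        qed
      qed
      have yY: "y \<in> topspace Y" using y TY by blast
      then have "gdelta_in Y {y}" using assms(7) by (simp add: G_delta_points_def)
      then obtain \<U> where U: "countable \<U>" "\<forall>U\<in>\<U>. openin Y U" "\<Inter>\<U> = {y}"
        unfolding gdelta_in_alt intersection_of_def by blast
      define Z where "Z = (\<Union>U\<in>\<U>. {x \<in> topspace X. f x \<in> topspace Y - U})"
      have "?L Z" unfolding Z_def
      proof (rule Lindelof_space_Union)
        show "countable ((\<lambda>U. {x \<in> topspace X. f x \<in> topspace Y - U}) ` \<U>)" using U by blast
      next
        fix S assume "S \<in> (\<lambda>U. {x \<in> topspace X. f x \<in> topspace Y - U}) ` \<U>"
        then obtain U where "U \<in> \<U>" "S = {x \<in> topspace X. f x \<in> topspace Y - U}" by blast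
        moreover have "closedin Y (topspace Y - U)" using U \<open>U \<in> \<U>\<close> by blast
        moreover have "(topspace Y - U) \<inter> T \<subseteq> Collect good"
          using uniq U(3) \<open>U \<in> \<U>\<close> by blast
        ultimately show "?L S" using cover by blast
      qed
      moreover have "Z \<subseteq> topspace X" unfolding Z_def by blast
      moreover have "f ` (topspace X - Z) = {y}"
      proof
        show "f ` (topspace X - Z) \<subseteq> {y}"
        proof
          fix z assume "z \<in> f ` (topspace X - Z)"
          then obtain x where x: "x \<in> topspace X" "x \<notin> Z" "z = f x" by blast
          then have "f x \<in> topspace Y" using continuous_map_image_subset_topspace[OF f] by blast
          then have "f x \<in> \<Inter>\<U>" using x unfolding Z_def by blast
          then show "z \<in> {y}" using U(3) x by blast
        qed
      next
        obtain x where "x \<in> topspace X" "f x = y" using y unfolding T_def by blast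
        moreover have "x \<notin> Z" using U(3) \<open>f x = y\<close> unfolding Z_def by blast
        ultimately show "{y} \<subseteq> f ` (topspace X - Z)" by blast
      qed
      ultimately show ?thesis unfolding Lindelofin_def by blast
    qed
    then show ?thesis by (simp add: EC_def)
  qed
qed

end
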